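(* Let $\mathcal L>0$, $m_\pm>0$, $\rho_\pm>0$, $S_+<0<S_-$, $\lambda_\pm=\sqrt{\rho_\pm/m_\pm}$, and $S_I=0$. Consider the ODE system $\dot q_1=\mathcal H_1^{\rm p}(q_1,q_2)$, $\dot q_2=\mathcal H_2^{\rm p}(q_1,q_2)$ with \[ \mathcal H_1^{\rm p}(q_1,q_2)=\tfrac12\Big(-\tfrac{S_+}{\rho_+}m_+\lambda_+\tanh\big(\lambda_+\tfrac{q_2-q_1}{2}\big)-\tfrac{S_-}{\rho_-}m_-\lambda_-\tanh(\lambda_-q_1)-S_I\Big), \] \[ \mathcal H_2^{\rm p}(q_1,q_2)=\tfrac12\Big(\tfrac{S_+}{\rho_+}m_+\lambda_+\tanh\big(\lambda_+\tfrac{q_2-q_1}{2}\big)+\tfrac{S_-}{\rho_-}m_-\lambda_-\tanh(\lambda_-(\mathcal L-q_2))+S_I\Big). \] Then the triangular set $\mathcal T=\{(q_1,q_2)\in\mathbb R^2: 0\le q_2\le\mathcal L,\ 0\le q_1\le q_2\}$ is invariant for this system: if $(q_1(0),q_2(0))\in\mathcal T$, then any solution $(q_1(t),q_2(t))_{t>0}$ emanating from it satisfies $(q_1(t),q_2(t))\in\mathcal T$ for all $t>0$.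
   Context: This ODE system describes the motion of the two interfaces $z=q_1(t)<z=q_2(t)$ of a flat layer $\Omega_+=(q_1,q_2)\times(0,\tilde{\mathcal L})^{d-1}$ in $(0,\mathcal L)\times(0,\tilde{\mathcal L})^{d-1}$ for the chemically active Mullins--Sekerka problem. *)

theory Defs
  imports "HOL-Analysis.Analysis"
begin

definition H1p :: "real \<Rightarrow> real \<Rightarrow> real \<Rightarrow> real \<Rightarrow> real \<Rightarrow> real \<Rightarrow> real \<Rightarrow> real \<Rightarrow> real \<Rightarrow> real \<Rightarrow> real" where
  "H1p L mp mm rp rm Sp Sm SI q1 q2 =
     (let lp = sqrt (rp / mp); lm = sqrt (rm / mm) in
      (1/2) * ( - (Sp / rp) * mp * lp * tanh (lp * (q2 - q1) / 2)
                - (Sm / rm) * mm * lm * tanh (lm * q1) - SI))"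

definition H2p :: "real \<Rightarrow> real \<Rightarrow> real \<Rightarrow> real \<Rightarrow> real \<Rightarrow> real \<Rightarrow> real \<Rightarrow> real \<Rightarrow> real \<Rightarrow> real \<Rightarrow> real" where
  "H2p L mp mm rp rm Sp Sm SI q1 q2 =
     (let lp = sqrt (rp / mp); lm = sqrt (rm / mm) in
      (1/2) * ( (Sp / rp) * mp * lp * tanh (lp * (q2 - q1) / 2)
                + (Sm / rm) * mm * lm * tanh (lm * (L - q2)) + SI))"

definition triangleT :: "real \<Rightarrow> (real \<times> real) set" where
  "triangleT L = {(q1, q2). 0 \<le> q2 \<and> q2 \<le> L \<and> 0 \<le> q1 \<and> q1 \<le> q2}"

end

theory Submission
  imports Defs
begin

lemma barrier:
  fixes f f' :: "real \<Rightarrow> real"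
  assumes cont: "continuous_on {0..} f"
    and der: "\<And>t. t > 0 \<Longrightarrow> (f has_real_derivative f' t) (at t)"
    and pos: "\<And>t. t > 0 \<Longrightarrow> f t < 0 \<Longrightarrow> f' t > 0"
    and f0: "f 0 \<ge> 0" and s: "s \<ge> 0"
  shows "f s \<ge> 0"
proof (rule ccontr)
  assume neg: "\<not> f s \<ge> 0"
  have "continuous_on {0..s} f" using cont by (rule continuous_on_subset) auto
  then obtain m where m: "m \<in> {0..s}" and mmin: "\<forall>x\<in>{0..s}. f m \<le> f x"
    using continuous_attains_inf[of "{0..s}" f] s by auto
  have "f m \<le> f s" using mmin s by auto
  hence fm: "f m < 0" using neg by linarith
  hence "m \<noteq> 0" using f0 by auto
  hence mpos: "m > 0" using m by auto
  have "f' m > 0" using pos[OF mpos fm] .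
  then obtain d where d: "d > 0" "\<forall>h>0. h < d \<longrightarrow> f (m - h) < f m"
    using DERIV_pos_inc_left[OF der[OF mpos]] by blast
  define h where "h = min (d/2) (m/2)"
  have "h > 0" "h < d" using d mpos by (auto simp: h_def)
  hence "f (m - h) < f m" using d by blast
  moreover have "m - h \<in> {0..s}" using m mpos d(1) by (auto simp: h_def)
  ultimately show False using mmin[rule_format, of "m - h"] by linarith
qed

theorem proposition4p1:
  fixes L mp mm rp rm Sp Sm SI :: real and q1 q2 :: "real \<Rightarrow> real"
  assumes "L > 0" "mp > 0" "mm > 0" "rp > 0" "rm > 0" "Sp < 0" "0 < Sm" "SI = 0"
    and cont1: "continuous_on {0..} q1" and cont2: "continuous_on {0..} q2"
    and ode1: "\<And>t. t > 0 \<Longrightarrow> (q1 has_real_derivative H1p L mp mm rp rm Sp Sm SI (q1 t) (q2 t)) (at t)"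
    and ode2: "\<And>t. t > 0 \<Longrightarrow> (q2 has_real_derivative H2p L mp mm rp rm Sp Sm SI (q1 t) (q2 t)) (at t)"
    and init: "(q1 0, q2 0) \<in> triangleT L"
  shows "\<forall>t > 0. (q1 t, q2 t) \<in> triangleT L"
proof -
  define lp where "lp = sqrt (rp / mp)"
  define lm where "lm = sqrt (rm / mm)"
  define c where "c = Sp / rp * mp * lp"
  define e where "e = Sm / rm * mm * lm"
  have lp: "lp > 0" using assms by (simp add: lp_def)
  have lm: "lm > 0" using assms by (simp add: lm_def)
  have c: "c < 0" using assms lp by (simp add: c_def mult_neg_pos divide_neg_pos)
  have e: "e > 0" using assms lm by (simp add: e_def)
  have H1: "H1p L mp mm rp rm Sp Sm SI a b = (1/2) * (- c * tanh (lp * (b - a) / 2) - e * tanh (lm * a))" for a b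
    using assms by (simp add: H1p_def Let_def lp_def lm_def c_def e_def)
  have H2: "H2p L mp mm rp rm Sp Sm SI a b = (1/2) * (c * tanh (lp * (b - a) / 2) + e * tanh (lm * (L - b)))" for a b
    using assms by (simp add: H2p_def Let_def lp_def lm_def c_def e_def)
  define f3 where "f3 = (\<lambda>t. q2 t - q1 t)"
  have d3: "f3 t \<ge> 0" if "t \<ge> 0" for t
  proof (rule barrier[of f3 "\<lambda>t. H2p L mp mm rp rm Sp Sm SI (q1 t) (q2 t) - H1p L mp mm rp rm Sp Sm SI (q1 t) (q2 t)"])
    show "continuous_on {0..} f3" unfolding f3_def using cont1 cont2 by (intro continuous_intros)
    show "(f3 has_real_derivative H2p L mp mm rp rm Sp Sm SI (q1 t) (q2 t) - H1p L mp mm rp rm Sp Sm SI (q1 t) (q2 t)) (at t)" if "t > 0" for t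
      unfolding f3_def using ode1[OF that] ode2[OF that] by (intro derivative_intros)
    show "0 < H2p L mp mm rp rm Sp Sm SI (q1 t) (q2 t) - H1p L mp mm rp rm Sp Sm SI (q1 t) (q2 t)"
      if "t > 0" "f3 t < 0" for t
    proof -
      have neg: "q2 t - q1 t < 0" using that by (simp add: f3_def)
      have "tanh (lp * (q2 t - q1 t) / 2) < 0" using neg lp by (simp add: mult_pos_neg)
      hence A: "c * tanh (lp * (q2 t - q1 t) / 2) > 0" using c by (simp add: mult_neg_neg)
      have "- (lm * q1 t) \<le> lm * (L - q2 t)" using neg lm assms(1)
        by (simp add: algebra_simps) (smt (verit) mult_left_mono mult_nonneg_nonneg)
      hence "tanh (- (lm * q1 t)) \<le> tanh (lm * (L - q2 t))" by (simp only: tanh_real_le_iff)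
      hence "tanh (lm * (L - q2 t)) + tanh (lm * q1 t) \<ge> 0" by simp
      hence B: "e * (tanh (lm * (L - q2 t)) + tanh (lm * q1 t)) \<ge> 0" using e by simp
      show ?thesis unfolding H1 H2 using A B by (simp add: algebra_simps)
    qed
    show "0 \<le> f3 0" using init by (simp add: f3_def triangleT_def)
  qed (use that in auto)
  have d1: "q1 t \<ge> 0" if "t \<ge> 0" for t
  proof (rule barrier[of q1 "\<lambda>t. H1p L mp mm rp rm Sp Sm SI (q1 t) (q2 t)"])
    show "0 < H1p L mp mm rp rm Sp Sm SI (q1 t) (q2 t)" if "t > 0" "q1 t < 0" for t
    proof -
      have "q2 t - q1 t \<ge> 0" using d3[of t] that by (simp add: f3_def)
      hence T: "tanh (lp * (q2 t - q1 t) / 2) \<ge> 0" using lp by simp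
      have A: "- c * tanh (lp * (q2 t - q1 t) / 2) \<ge> 0" using c T by (intro mult_nonneg_nonneg) auto
      have "tanh (lm * q1 t) < 0" using that lm by (simp add: mult_pos_neg)
      hence B: "e * tanh (lm * q1 t) < 0" using e by (simp add: mult_pos_neg)
      show ?thesis unfolding H1 using A B by simp
    qed
  qed (use that cont1 ode1 init in \<open>auto simp: triangleT_def\<close>)
  define f2 where "f2 = (\<lambda>t. L - q2 t)"
  have d2: "f2 t \<ge> 0" if "t \<ge> 0" for t
  proof (rule barrier[of f2 "\<lambda>t. - H2p L mp mm rp rm Sp Sm SI (q1 t) (q2 t)"])
    show "continuous_on {0..} f2" unfolding f2_def using cont2 by (intro continuous_intros)
    show "(f2 has_real_derivative - H2p L mp mm rp rm Sp Sm SI (q1 t) (q2 t)) (at t)" if "t > 0" for t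
      unfolding f2_def using ode2[OF that] by (auto intro!: derivative_eq_intros)
    show "0 < - H2p L mp mm rp rm Sp Sm SI (q1 t) (q2 t)" if "t > 0" "f2 t < 0" for t
    proof -
      have "q2 t - q1 t \<ge> 0" using d3[of t] that by (simp add: f3_def)
      hence T: "tanh (lp * (q2 t - q1 t) / 2) \<ge> 0" using lp by simp
      have A: "c * tanh (lp * (q2 t - q1 t) / 2) \<le> 0" using c T by (intro mult_nonpos_nonneg) auto
      have "L - q2 t < 0" using that by (simp add: f2_def)
      hence "tanh (lm * (L - q2 t)) < 0" using lm by (simp add: mult_pos_neg)
      hence B: "e * tanh (lm * (L - q2 t)) < 0" using e by (simp add: mult_pos_neg)
      show ?thesis unfolding H2 using A B by simp
    qed
    show "0 \<le> f2 0" using init by (simp add: f2_def triangleT_def)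
  qed (use that in auto)
  show ?thesis
  proof (intro allI impI)
    fix t :: real assume "t > 0"
    thus "(q1 t, q2 t) \<in> triangleT L"
      using d1[of t] d2[of t] d3[of t] by (simp add: triangleT_def f2_def f3_def)
  qed
qed

end
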